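(* Let $\omega$ be a Poisson point process on $\mathbb{R}^2$ with intensity $1$ (law $\mathbb{P}$). Let $\xi$ be the exponent of transversal fluctuations (defined in the context), let $\gamma\in(\xi,1)$, $b\in(\gamma,1)$, and let $N$ be such that $N^b-4N^\gamma>0$. Let $\mathbf{v}_1=(1/\sqrt2,1/\sqrt2)$, $\mathbf{v}_2=(-1/\sqrt2,1/\sqrt2)$, $m_N=3N^\gamma\mathbf{v}_2$, and let $C_2=C(\gamma,N)+m_N$, where $C(\gamma,N)=\{(x,y)\,;\,0\le x+y\le 2N,\ -\sqrt{2}N^{\gamma}\le -x+y\le \sqrt{2}N^{\gamma}\}$. Let $A=(N^b+2N^\gamma)\mathbf{v}_1+2N^\gamma\mathbf{v}_2$ and $B=(N^b+4N^\gamma)\mathbf{v}_1+4N^\gamma\mathbf{v}_2$ (so the segment $AB$ is vertical with $A$ on the lower and $B$ on the upper side of $C_2$). Let $K=[8N^{2\gamma}]+1$ and divide $AB$ into $K$ equal segments with endpoints $z_0=A,z_1,\dots,z_K=B$. Let $L_i$ be the part of the horizontal line through $z_i$ lying in $C_2$, and let $F_i$ be the parallelogram in $C_2$ between $L_{i-1}$ and $L_i$, $i=1,\dots,K$. Let $t_N=\sqrt2N-6N^\gamma-2N^b$ and $F_i'=F_i+t_N\mathbf{v}_1$. Set $$D_N(\omega)=\max_{1\le i\le K}\omega(\bar F_i)+\max_{1\le j\le K}\omega(\bar F_j'),$$ where $\omega(F)$ is the number of Poisson points in $F$ and $\bar F$ is the closure. Then there is a numerical constant $C$ such that $$\mathbb{P}[D_N(\omega)\ge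 d]\le C(8N^{2\gamma}+1)e^{-d/2}$$ for all $d\ge1$.
   Context: Write $(x,y)\prec(x',y')$ if $x<x'$ and $y<y'$. For $w\prec w'$, an up/right path from $w$ to $w'$ is a sequence of Poisson points $\zeta_1\prec\cdots\prec\zeta_M$ with $w\prec\zeta_1$, $\zeta_M\prec w'$, of length $M$; $d(w,w';\omega)$ is the maximal length, and a maximal path attains it. With $w_N=(N,N)$, $A_N^\gamma$ is the event that every maximal path from $0$ to $w_N$ has all its points in $C(\gamma,N)$, and $\xi=\inf\{\gamma>0\,;\,\liminf_{N\to\infty}\mathbb{P}[A_N^\gamma]=1\}$ (it is a fact that $\xi<1$). $[x]$ denotes the integer part. *)

theory Defs
  imports "HOL-Probability.Probability"
begin

type_synonym pt = "real \<times> real"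

text \<open>A point configuration is modelled as a set of points of the plane.\<close>

definition count_in :: "pt set \<Rightarrow> pt set \<Rightarrow> nat" where
  "count_in P A = card (P \<inter> A)"

definition poisson_pp :: "'a measure \<Rightarrow> ('a \<Rightarrow> pt set) \<Rightarrow> bool" where
  "poisson_pp M Om \<longleftrightarrow> prob_space M \<and>
     (\<forall>A. A \<in> sets borel \<and> bounded A \<longrightarrow>
        (\<forall>x\<in>space M. finite (Om x \<inter> A)) \<and>
        (\<lambda>x. count_in (Om x) A) \<in> measurable M (count_space UNIV) \<and>
        (\<forall>k::nat. measure M {x\<in>space M. count_in (Om x) A = k} =
            (measure lborel A) ^ k / fact k * exp (- measure lborel A))) \<and>
     (\<forall>A :: nat \<Rightarrow> pt set. (\<forall>i. A i \<in> sets borel \<and> bounded (A i)) \<and> disjoint_family A \<longrightarrow>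
        prob_space.indep_vars M (\<lambda>_. count_space UNIV) (\<lambda>i x. count_in (Om x) (A i)) UNIV)"

definition prec :: "pt \<Rightarrow> pt \<Rightarrow> bool" where
  "prec w w' \<longleftrightarrow> fst w < fst w' \<and> snd w < snd w'"

definition up_right_path :: "pt set \<Rightarrow> pt \<Rightarrow> pt \<Rightarrow> pt list \<Rightarrow> bool" where
  "up_right_path P w w' zs \<longleftrightarrow> sorted_wrt prec zs \<and> set zs \<subseteq> P \<and>
     (zs \<noteq> [] \<longrightarrow> prec w (hd zs) \<and> prec (last zs) w')"

definition lpp_dist :: "pt \<Rightarrow> pt \<Rightarrow> pt set \<Rightarrow> nat" where
  "lpp_dist w w' P = Max {length zs | zs. up_right_path P w w' zs}"

definition maximal_path :: "pt set \<Rightarrow> pt \<Rightarrow> pt \<Rightarrow> pt list \<Rightarrow> bool" where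
  "maximal_path P w w' zs \<longleftrightarrow> up_right_path P w w' zs \<and> length zs = lpp_dist w w' P"

definition cyl :: "real \<Rightarrow> real \<Rightarrow> pt set" where
  "cyl \<gamma> N = {(x, y). 0 \<le> x + y \<and> x + y \<le> 2 * N \<and>
      - sqrt 2 * N powr \<gamma> \<le> - x + y \<and> - x + y \<le> sqrt 2 * N powr \<gamma>}"

definition event_A :: "'a measure \<Rightarrow> ('a \<Rightarrow> pt set) \<Rightarrow> real \<Rightarrow> nat \<Rightarrow> 'a set" where
  "event_A M Om \<gamma> N = {x \<in> space M. \<forall>zs. maximal_path (Om x) (0, 0) (real N, real N) zs
        \<longrightarrow> set zs \<subseteq> cyl \<gamma> (real N)}"

definition xi_exp :: "'a measure \<Rightarrow> ('a \<Rightarrow> pt set) \<Rightarrow> real" where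
  "xi_exp M Om = Inf {\<gamma>. \<gamma> > 0 \<and>
      liminf (\<lambda>N. ereal (measure M (event_A M Om \<gamma> N))) = 1}"

definition v1 :: pt where "v1 = (1 / sqrt 2, 1 / sqrt 2)"
definition v2 :: pt where "v2 = (- 1 / sqrt 2, 1 / sqrt 2)"

definition C2 :: "real \<Rightarrow> real \<Rightarrow> pt set" where
  "C2 \<gamma> N = (\<lambda>p. p + (3 * N powr \<gamma>) *\<^sub>R v2) ` cyl \<gamma> N"

definition ptA :: "real \<Rightarrow> real \<Rightarrow> real \<Rightarrow> pt" where
  "ptA \<gamma> b N = (N powr b + 2 * N powr \<gamma>) *\<^sub>R v1 + (2 * N powr \<gamma>) *\<^sub>R v2"

definition ptB :: "real \<Rightarrow> real \<Rightarrow> real \<Rightarrow> pt" where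
  "ptB \<gamma> b N = (N powr b + 4 * N powr \<gamma>) *\<^sub>R v1 + (4 * N powr \<gamma>) *\<^sub>R v2"

definition nK :: "real \<Rightarrow> real \<Rightarrow> nat" where
  "nK \<gamma> N = nat \<lfloor>8 * N powr (2 * \<gamma>)\<rfloor> + 1"

definition zpt :: "real \<Rightarrow> real \<Rightarrow> real \<Rightarrow> nat \<Rightarrow> pt" where
  "zpt \<gamma> b N i = ptA \<gamma> b N + (real i / real (nK \<gamma> N)) *\<^sub>R (ptB \<gamma> b N - ptA \<gamma> b N)"

definition Fpar :: "real \<Rightarrow> real \<Rightarrow> real \<Rightarrow> nat \<Rightarrow> pt set" where
  "Fpar \<gamma> b N i = {p \<in> C2 \<gamma> N. snd (zpt \<gamma> b N (i - 1)) \<le> snd p \<and> snd p \<le> snd (zpt \<gamma> b N i)}"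

definition tN :: "real \<Rightarrow> real \<Rightarrow> real \<Rightarrow> real" where
  "tN \<gamma> b N = sqrt 2 * N - 6 * N powr \<gamma> - 2 * N powr b"

definition Fpar' :: "real \<Rightarrow> real \<Rightarrow> real \<Rightarrow> nat \<Rightarrow> pt set" where
  "Fpar' \<gamma> b N i = (\<lambda>p. p + tN \<gamma> b N *\<^sub>R v1) ` Fpar \<gamma> b N i"

definition D_N :: "real \<Rightarrow> real \<Rightarrow> real \<Rightarrow> pt set \<Rightarrow> nat" where
  "D_N \<gamma> b N P =
     Max ((\<lambda>i. count_in P (closure (Fpar \<gamma> b N i))) ` {1..nK \<gamma> N}) +
     Max ((\<lambda>j. count_in P (closure (Fpar' \<gamma> b N j))) ` {1..nK \<gamma> N})"

end

theory Submission
  imports Defs begin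

lemma poisson_tail:
  fixes f :: "'a \<Rightarrow> nat" and lam t :: real
  assumes ps: "prob_space M"
    and meas: "f \<in> measurable M (count_space UNIV)"
    and pmf: "\<And>k. measure M {x\<in>space M. f x = k} = lam ^ k / fact k * exp (- lam)"
    and l0: "0 \<le> lam" and l2: "lam \<le> 2"
  shows "measure M {x\<in>space M. real (f x) \<ge> t} \<le> exp (2 * (exp 1 - 1)) * exp (- t)"
proof -
  interpret prob_space M by (rule ps)
  define n0 where "n0 = nat \<lceil>t\<rceil>"
  define A where "A k = {x\<in>space M. f x = k + n0}" for k
  have Asets: "range A \<subseteq> sets M"
  proof safe
    fix k
    have "f -` {k + n0} \<inter> space M \<in> sets M" by (rule measurable_sets[OF meas]) auto
    moreover have "f -` {k + n0} \<inter> space M = A k" unfolding A_def by auto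
    ultimately show "A k \<in> sets M" by simp
  qed
  have disj: "disjoint_family A" unfolding disjoint_family_on_def A_def by auto
  have U: "(\<Union>k. A k) = {x\<in>space M. real (f x) \<ge> t}"
  proof safe
    fix x k assume "x \<in> A k"
    then have "f x = k + n0" "x \<in> space M" unfolding A_def by auto
    then show "t \<le> real (f x)" unfolding n0_def by linarith
    show "x \<in> space M" by fact
  next
    fix x assume "x \<in> space M" "t \<le> real (f x)"
    then have "f x \<ge> n0" unfolding n0_def by linarith
    then have "x \<in> A (f x - n0)" using \<open>x \<in> space M\<close> unfolding A_def by auto
    then show "x \<in> (\<Union>k. A k)" by blast
  qed
  have s1: "(\<lambda>k. measure M (A k)) sums measure M {x\<in>space M. real (f x) \<ge> t}"
    using measure_UNION[OF Asets disj] U by (simp add: emeasure_eq_measure)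
  define c where "c = exp (- lam) * exp (- t)"
  define g where "g m = (exp 1 * lam) ^ m /\<^sub>R fact m" for m
  have s2: "(\<lambda>k. c * g (k + n0)) sums (c * (exp (exp 1 * lam) - (\<Sum>i<n0. g i)))"
    unfolding g_def by (intro sums_mult sums_split_initial_segment exp_converges)
  have le: "measure M (A k) \<le> c * g (k + n0)" for k
  proof -
    have m: "measure M (A k) = lam ^ (k + n0) / fact (k + n0) * exp (- lam)"
      unfolding A_def by (rule pmf)
    have "t \<le> real (k + n0)" unfolding n0_def by linarith
    then have "exp t \<le> exp 1 ^ (k + n0)" by (simp add: exp_of_nat_mult[symmetric])
    then have "1 \<le> exp 1 ^ (k + n0) * exp (- t)" by (simp add: exp_minus field_simps)
    then have "lam ^ (k + n0) / fact (k + n0) * exp (- lam) * 1 \<le>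
       lam ^ (k + n0) / fact (k + n0) * exp (- lam) * (exp 1 ^ (k + n0) * exp (- t))"
      using l0 by (intro mult_left_mono) auto
    then show ?thesis unfolding m c_def g_def by (simp add: power_mult_distrib field_simps)
  qed
  have "measure M {x\<in>space M. real (f x) \<ge> t} \<le> c * (exp (exp 1 * lam) - (\<Sum>i<n0. g i))"
    by (rule sums_le[OF le s1 s2])
  also have "\<dots> \<le> c * exp (exp 1 * lam)"
    unfolding c_def g_def using l0 by (intro mult_left_mono) (auto intro!: sum_nonneg)
  also have "\<dots> = exp ((exp 1 - 1) * lam) * exp (- t)"
    unfolding c_def by (simp add: exp_add[symmetric] algebra_simps)
  also have "\<dots> \<le> exp (2 * (exp 1 - 1)) * exp (- t)"
  proof -
    have "0 \<le> exp (1::real) - 1" by simp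
    then have "(exp 1 - 1) * lam \<le> 2 * (exp 1 - 1)" using mult_right_mono[OF l2, of "exp 1 - 1"] by (simp add: algebra_simps)
    then show ?thesis by (intro mult_right_mono) auto
  qed
  finally show ?thesis .
qed

lemma box_area:
  fixes S :: "pt set"
  assumes "S \<subseteq> cbox (a1, a2) (a1 + w, a2 + h)" "0 \<le> w" "0 \<le> h"
  shows "bounded (closure S)" "closure S \<in> sets borel" "measure lborel (closure S) \<le> w * h"
proof -
  have c: "closure S \<subseteq> cbox (a1, a2) (a1 + w, a2 + h)"
    using assms(1) closure_minimal closed_cbox by blast
  show "bounded (closure S)" using c bounded_cbox bounded_subset by blast
  show "closure S \<in> sets borel" by (simp add: borel_closed)
  have "measure lborel (closure S) \<le> measure lborel (cbox (a1, a2) (a1 + w, a2 + h))"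
    using c by (intro measure_mono_fmeasurable fmeasurableI[OF _ emeasure_lborel_cbox_finite]) (auto simp: borel_closed)
  also have "\<dots> = w * h" using assms by (simp add: content_Pair)
  finally show "measure lborel (closure S) \<le> w * h" .
qed

lemma zpt_snd:
  "snd (zpt \<gamma> b N i) = snd (ptA \<gamma> b N) + real i / real (nK \<gamma> N) * (4 * (N powr \<gamma> / sqrt 2))"
proof -
  have "snd (ptB \<gamma> b N - ptA \<gamma> b N) = 4 * (N powr \<gamma> / sqrt 2)"
    unfolding ptA_def ptB_def v1_def v2_def by (simp add: field_simps)
  then show ?thesis unfolding zpt_def by simp
qed

lemma C2_mem:
  assumes "p \<in> C2 \<gamma> N"
  shows "4 * (N powr \<gamma> / sqrt 2) \<le> snd p - fst p \<and> snd p - fst p \<le> 8 * (N powr \<gamma> / sqrt 2)"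
proof -
  obtain x y where xy: "(x, y) \<in> cyl \<gamma> N" "p = (x, y) + (3 * N powr \<gamma>) *\<^sub>R v2"
    using assms unfolding C2_def by auto
  define q where "q = N powr \<gamma> / sqrt 2"
  have sq: "sqrt 2 * N powr \<gamma> = 2 * q" unfolding q_def
    by (simp add: field_simps)
  have p: "p = (x - 3 * q, y + 3 * q)" unfolding xy(2) q_def v2_def by (simp add: field_simps)
  have "- (2 * q) \<le> - x + y" "- x + y \<le> 2 * q" using xy(1) sq unfolding cyl_def by auto
  then show ?thesis unfolding p q_def[symmetric] by simp
qed

lemma K_big: "8 * N powr (2 * \<gamma>) < real (nK \<gamma> N)" "1 \<le> real (nK \<gamma> N)"
proof -
  have f0: "0 \<le> \<lfloor>8 * N powr (2 * \<gamma>)\<rfloor>" by simp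
  have "8 * N powr (2 * \<gamma>) < real_of_int \<lfloor>8 * N powr (2 * \<gamma>)\<rfloor> + 1"
    using floor_correct[of "8 * N powr (2 * \<gamma>)"] unfolding of_int_add of_int_1 by linarith
  moreover have "real (nK \<gamma> N) = real_of_int \<lfloor>8 * N powr (2 * \<gamma>)\<rfloor> + 1"
    unfolding nK_def using f0 by simp
  ultimately show "8 * N powr (2 * \<gamma>) < real (nK \<gamma> N)" by linarith
  show "1 \<le> real (nK \<gamma> N)" unfolding nK_def by simp
qed

lemma Fpar_box:
  assumes N: "0 < N" and i: "i \<in> {1..nK \<gamma> N}"
  shows "\<exists>a1 a2 w h. Fpar \<gamma> b N i \<subseteq> cbox (a1, a2) (a1 + w, a2 + h) \<and> 0 \<le> w \<and> 0 \<le> h \<and> w * h \<le> 2"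
proof -
  define q where "q = N powr \<gamma> / sqrt 2"
  define K where "K = real (nK \<gamma> N)"
  define y0 where "y0 = snd (zpt \<gamma> b N (i - 1))"
  define h where "h = 4 * q / K"
  have K1: "1 \<le> K" using K_big unfolding K_def by auto
  have q0: "0 \<le> q" unfolding q_def by simp
  have h0: "0 \<le> h" unfolding h_def using K1 q0 by simp
  have yi: "snd (zpt \<gamma> b N i) = y0 + h"
    using i K1 unfolding y0_def h_def zpt_snd K_def[symmetric] q_def[symmetric]
    by (simp add: of_nat_diff field_simps)
  have sub: "Fpar \<gamma> b N i \<subseteq> cbox (y0 - 8 * q, y0) (y0 - 8 * q + (4 * q + h), y0 + h)"
  proof
    fix p assume "p \<in> Fpar \<gamma> b N i"
    then have "p \<in> C2 \<gamma> N" "y0 \<le> snd p" "snd p \<le> snd (zpt \<gamma> b N i)"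
      unfolding Fpar_def y0_def by auto
    then have "p \<in> C2 \<gamma> N" "y0 \<le> snd p" "snd p \<le> y0 + h" unfolding yi by auto
    moreover from C2_mem[OF this(1)] have "4 * q \<le> snd p - fst p" "snd p - fst p \<le> 8 * q"
      unfolding q_def by auto
    ultimately show "p \<in> cbox (y0 - 8 * q, y0) (y0 - 8 * q + (4 * q + h), y0 + h)"
      by (cases p) (auto simp: cbox_Pair_iff)
  qed
  have qq: "16 * q ^ 2 = 8 * N powr (2 * \<gamma>)"
    unfolding q_def using N by (simp add: power_divide powr_mult_base power2_eq_square powr_add[symmetric])
  have "(4 * q + h) * h = 16 * q ^ 2 / K + 16 * q ^ 2 / K ^ 2"
    unfolding h_def using K1 by (simp add: field_simps power2_eq_square)
  also have "\<dots> \<le> 1 + 1"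
  proof (intro add_mono)
    have lt: "16 * q ^ 2 \<le> K" using K_big(1)[of N \<gamma>] qq unfolding K_def by simp
    then show "16 * q ^ 2 / K \<le> 1" using K1 by simp
    have "K \<le> K ^ 2" using K1 by (simp add: power2_eq_square)
    then show "16 * q ^ 2 / K ^ 2 \<le> 1" using lt K1 by simp
  qed
  finally show ?thesis using sub q0 h0 by (intro exI[of _ "y0 - 8 * q"] exI[of _ y0] exI[of _ "4 * q + h"] exI[of _ h]) auto
qed

lemma box_shift:
  assumes "S \<subseteq> cbox (a1, a2) (a1 + w, a2 + h)"
  shows "(\<lambda>p. p + t *\<^sub>R v1) ` S \<subseteq> cbox (a1 + t / sqrt 2, a2 + t / sqrt 2) (a1 + t / sqrt 2 + w, a2 + t / sqrt 2 + h)"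
  using assms by (auto simp: v1_def cbox_Pair_iff subset_iff)

lemma tail_set:
  assumes pp: "poisson_pp M Om" and S: "S \<subseteq> cbox (a1, a2) (a1 + w, a2 + h)"
    and w: "0 \<le> w" and h: "0 \<le> h" and wh: "w * h \<le> 2"
  shows "{x\<in>space M. t \<le> real (count_in (Om x) (closure S))} \<in> sets M"
    "measure M {x\<in>space M. t \<le> real (count_in (Om x) (closure S))} \<le> exp (2 * (exp 1 - 1)) * exp (- t)"
proof -
  have ps: "prob_space M" using pp unfolding poisson_pp_def by blast
  have b: "closure S \<in> sets borel" "bounded (closure S)" using box_area[OF S w h] by auto
  have ar: "measure lborel (closure S) \<le> 2" using box_area(3)[OF S w h] wh by linarith
  have meas: "(\<lambda>x. count_in (Om x) (closure S)) \<in> measurable M (count_space UNIV)"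
    and pmf: "\<And>k. measure M {x\<in>space M. count_in (Om x) (closure S) = k} =
       (measure lborel (closure S)) ^ k / fact k * exp (- measure lborel (closure S))"
    using pp b unfolding poisson_pp_def by blast+
  have "(\<lambda>x. count_in (Om x) (closure S)) -` {k. t \<le> real k} \<inter> space M \<in> sets M"
    by (rule measurable_sets[OF meas]) auto
  moreover have "(\<lambda>x. count_in (Om x) (closure S)) -` {k. t \<le> real k} \<inter> space M
     = {x\<in>space M. t \<le> real (count_in (Om x) (closure S))}" by auto
  ultimately show "{x\<in>space M. t \<le> real (count_in (Om x) (closure S))} \<in> sets M" by simp
  show "measure M {x\<in>space M. t \<le> real (count_in (Om x) (closure S))} \<le> exp (2 * (exp 1 - 1)) * exp (- t)"
    by (rule poisson_tail[OF ps meas pmf measure_nonneg ar])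
qed

theorem lemma2p1:
  "\<exists>C::real. \<forall>(M :: 'a measure) Om. poisson_pp M Om \<longrightarrow>
     (\<forall>\<gamma> b N d. xi_exp M Om < \<gamma> \<and> \<gamma> < 1 \<and> \<gamma> < b \<and> b < 1 \<and> 0 < N \<and>
        N powr b - 4 * N powr \<gamma> > 0 \<and> d \<ge> 1 \<longrightarrow>
        measure M {x \<in> space M. real (D_N \<gamma> b N (Om x)) \<ge> d}
          \<le> C * (8 * N powr (2 * \<gamma>) + 1) * exp (- d / 2))"
proof (intro exI[of _ "2 * exp (2 * (exp 1 - 1))"] allI impI, elim conjE)
  fix M :: "'a measure" and Om :: "'a \<Rightarrow> pt set" and \<gamma> b N d :: real
  assume pp: "poisson_pp M Om" and N: "0 < N"
  interpret prob_space M using pp unfolding poisson_pp_def by blast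
  define c0 :: real where "c0 = exp (2 * (exp 1 - 1))"
  define K where "K = nK \<gamma> N"
  define E where "E i = {x\<in>space M. d / 2 \<le> real (count_in (Om x) (closure (Fpar \<gamma> b N i)))}" for i
  define E' where "E' i = {x\<in>space M. d / 2 \<le> real (count_in (Om x) (closure (Fpar' \<gamma> b N i)))}" for i
  have EE: "E i \<in> sets M \<and> measure M (E i) \<le> c0 * exp (- (d / 2)) \<and>
            E' i \<in> sets M \<and> measure M (E' i) \<le> c0 * exp (- (d / 2))" if i: "i \<in> {1..K}" for i
  proof -
    obtain a1 a2 w h where box: "Fpar \<gamma> b N i \<subseteq> cbox (a1, a2) (a1 + w, a2 + h)" "0 \<le> w" "0 \<le> h" "w * h \<le> 2"
      using Fpar_box[OF N, of i \<gamma> b] i unfolding K_def by blast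
    note box' = box_shift[OF box(1), of "tN \<gamma> b N"]
    show ?thesis unfolding E_def E'_def c0_def Fpar'_def
      using tail_set[OF pp box] tail_set[OF pp box' box(2-4)] by blast
  qed
  have K1: "1 \<le> K" unfolding K_def nK_def by simp
  have sub: "{x \<in> space M. d \<le> real (D_N \<gamma> b N (Om x))} \<subseteq> (\<Union>i\<in>{1..K}. E i) \<union> (\<Union>i\<in>{1..K}. E' i)"
  proof
    fix x assume x: "x \<in> {x \<in> space M. d \<le> real (D_N \<gamma> b N (Om x))}"
    define f where "f i = count_in (Om x) (closure (Fpar \<gamma> b N i))" for i
    define f' where "f' i = count_in (Om x) (closure (Fpar' \<gamma> b N i))" for i
    have ne: "f ` {1..K} \<noteq> {}" "f' ` {1..K} \<noteq> {}" using K1 by auto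
    have "d \<le> real (Max (f ` {1..K})) + real (Max (f' ` {1..K}))"
      using x unfolding D_N_def f_def f'_def K_def by simp
    then have "d / 2 \<le> real (Max (f ` {1..K})) \<or> d / 2 \<le> real (Max (f' ` {1..K}))" by linarith
    moreover have "Max (f ` {1..K}) \<in> f ` {1..K}" "Max (f' ` {1..K}) \<in> f' ` {1..K}"
      using ne by (auto intro!: Max_in)
    ultimately show "x \<in> (\<Union>i\<in>{1..K}. E i) \<union> (\<Union>i\<in>{1..K}. E' i)"
      using x unfolding E_def E'_def f_def f'_def by auto
  qed
  have sE: "(\<Union>i\<in>{1..K}. E i) \<in> sets M" "(\<Union>i\<in>{1..K}. E' i) \<in> sets M" using EE by auto
  have "measure M {x \<in> space M. d \<le> real (D_N \<gamma> b N (Om x))}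
      \<le> measure M ((\<Union>i\<in>{1..K}. E i) \<union> (\<Union>i\<in>{1..K}. E' i))"
    using sub sE by (intro finite_measure_mono) auto
  also have "\<dots> \<le> measure M (\<Union>i\<in>{1..K}. E i) + measure M (\<Union>i\<in>{1..K}. E' i)"
    using sE by (rule measure_Un_le)
  also have "\<dots> \<le> (\<Sum>i\<in>{1..K}. measure M (E i)) + (\<Sum>i\<in>{1..K}. measure M (E' i))"
    using EE by (intro add_mono measure_UNION_le) auto
  also have "\<dots> \<le> (\<Sum>i\<in>{1..K}. c0 * exp (- (d / 2))) + (\<Sum>i\<in>{1..K}. c0 * exp (- (d / 2)))"
    using EE by (intro add_mono sum_mono) auto
  also have "\<dots> = 2 * c0 * real K * exp (- d / 2)" by simp
  also have "\<dots> \<le> 2 * c0 * (8 * N powr (2 * \<gamma>) + 1) * exp (- d / 2)"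
  proof -
    have f0: "0 \<le> \<lfloor>8 * N powr (2 * \<gamma>)\<rfloor>" by simp
    have "real K = real_of_int \<lfloor>8 * N powr (2 * \<gamma>)\<rfloor> + 1" unfolding K_def nK_def using f0 by simp
    then have "real K \<le> 8 * N powr (2 * \<gamma>) + 1" by linarith
    then show ?thesis unfolding c0_def by (intro mult_right_mono mult_left_mono) auto
  qed
  finally show "measure M {x \<in> space M. d \<le> real (D_N \<gamma> b N (Om x))}
      \<le> 2 * exp (2 * (exp 1 - 1)) * (8 * N powr (2 * \<gamma>) + 1) * exp (- d / 2)"
    unfolding c0_def .
qed

end
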